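(* Let $(X,d,\preccurlyeq)$ be a preordered $s$-regular $b$-metric space, let $x_0\in X$, and let $\mathcal{F}=\{f_\alpha\}_{\alpha\in\mathcal{I}}$ ($\mathcal I$ nonempty) be a concordantly isotone family of self mappings of $X$ with $f_\alpha(x_0)\preccurlyeq x_0$ for all $\alpha\in\mathcal{I}$. Suppose that for every chain $C\in\mathcal{C}_1(x_0,\mathcal{F},\preccurlyeq)$ there exists $w\in X$ which is a common lower bound of the chains $f_\alpha(C)$, $\alpha\in\mathcal{I}$, and there exist $z\in X$ and $\beta\in\mathcal{I}$ such that for all $\alpha\in\mathcal{I}$ and all $i\in\mathbb{N}$, $f_\alpha(w)\preccurlyeq w\preccurlyeq f_\beta^i(z)$, and $d(f_\alpha^i(w),f_\beta^i(z))\to 0$ as $i\to\infty$ for all $\alpha\in\mathcal I$. Then the set $\mathrm{ComFix}(\mathcal{F})\cap O_X(x_0)$ is nonempty and contains a minimal element.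
   Context: A $b$-metric space with coefficient $s\ge 1$ is a nonempty set $X$ with $d:X\times X\to[0,\infty)$ such that for all $x,y,z$: $d(x,y)=0$ iff $x=y$; $d(x,y)=d(y,x)$; $d(x,y)\le s[d(x,z)+d(z,y)]$. A preorder is a reflexive transitive relation $\preccurlyeq$; $x\succcurlyeq y$ means $y\preccurlyeq x$; $x\prec y$ means $x\preccurlyeq y$ and $x\ne y$. A preordered $s$-regular $b$-metric space $(X,d,\preccurlyeq)$ is a $b$-metric space with coefficient $s$ with a preorder such that $x\preccurlyeq y\preccurlyeq z$ implies $\max\{d(x,y),d(y,z)\}\le s^2d(x,z)$. A chain is a subset any two elements of which are comparable. $f^i$ is the $i$-th iterate. A family $\mathcal{F}=\{f_\alpha\}_{\alpha\in\mathcal I}$ of self maps is concordantly isotone if for all $x,y\in X$, $x\prec y$ implies $f_\alpha(x)\preccurlyeq f_\beta(y)$ for all $\alpha,\beta\in\mathcal{I}$. $O_X(x_0)=\{x:x\preccurlyeq x_0\}$. $\mathcal{C}_1(\mathcal F,\preccurlyeq)$ is the set of chains $C\subset\bigcup_{\alpha}f_\alpha(X)$ such that $f_\alpha(x)\preccurlyeq x$ for all $x\in C,\alpha\in\mathcal I$, and for all $x,y\in C$, $x\prec y$ implies $x\preccurlyeq f_\alpha(y)$ for all $\alpha$. $\mathcal{C}_1(x_0,\mathcal F,\preccurlyeq)=\{C\in\mathcal C_1(\mathcal F,\preccurlyeq): C\subset O_X(x_0)\cap\bigcup_\alpha f_\alpha(O_X(x_0))\}$. $\mathrm{ComFix}(\mathcal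 F)=\{x: f_\alpha(x)=x\ \forall\alpha\in\mathcal I\}$. A common lower bound of the sets $f_\alpha(C)$ is $w$ with $w\preccurlyeq f_\alpha(x)$ for all $x\in C$, $\alpha\in\mathcal I$. A minimal element of $A$ is $w\in A$ with no $u\in A$ such that $u\prec w$. *)

theory Defs
  imports Complex_Main
begin

definition b_metric :: "real \<Rightarrow> ('a \<Rightarrow> 'a \<Rightarrow> real) \<Rightarrow> bool" where
  "b_metric s d \<longleftrightarrow> s \<ge> 1 \<and> (\<forall>x y. d x y \<ge> 0) \<and> (\<forall>x y. d x y = 0 \<longleftrightarrow> x = y)
     \<and> (\<forall>x y. d x y = d y x) \<and> (\<forall>x y z. d x y \<le> s * (d x z + d z y))"

definition preorder_rel :: "('a \<Rightarrow> 'a \<Rightarrow> bool) \<Rightarrow> bool" where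
  "preorder_rel le \<longleftrightarrow> (\<forall>x. le x x) \<and> (\<forall>x y z. le x y \<and> le y z \<longrightarrow> le x z)"

definition strict_rel :: "('a \<Rightarrow> 'a \<Rightarrow> bool) \<Rightarrow> 'a \<Rightarrow> 'a \<Rightarrow> bool" where
  "strict_rel le x y \<longleftrightarrow> le x y \<and> x \<noteq> y"

text \<open>Preordered s-regular b-metric space (X,d,le), X = UNIV.\<close>
definition preordered_s_regular_b_metric ::
  "real \<Rightarrow> ('a \<Rightarrow> 'a \<Rightarrow> real) \<Rightarrow> ('a \<Rightarrow> 'a \<Rightarrow> bool) \<Rightarrow> bool" where
  "preordered_s_regular_b_metric s d le \<longleftrightarrow> b_metric s d \<and> preorder_rel le \<and>
     (\<forall>x y z. le x y \<and> le y z \<longrightarrow> max (d x y) (d y z) \<le> s\<^sup>2 * d x z)"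

definition is_chain :: "('a \<Rightarrow> 'a \<Rightarrow> bool) \<Rightarrow> 'a set \<Rightarrow> bool" where
  "is_chain le C \<longleftrightarrow> (\<forall>x\<in>C. \<forall>y\<in>C. le x y \<or> le y x)"

definition concordantly_isotone ::
  "('a \<Rightarrow> 'a \<Rightarrow> bool) \<Rightarrow> 'i set \<Rightarrow> ('i \<Rightarrow> 'a \<Rightarrow> 'a) \<Rightarrow> bool" where
  "concordantly_isotone le I f \<longleftrightarrow>
     (\<forall>x y. strict_rel le x y \<longrightarrow> (\<forall>\<alpha>\<in>I. \<forall>\<beta>\<in>I. le (f \<alpha> x) (f \<beta> y)))"

definition lower_set :: "('a \<Rightarrow> 'a \<Rightarrow> bool) \<Rightarrow> 'a \<Rightarrow> 'a set" where
  "lower_set le x0 = {x. le x x0}"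

definition C1 :: "('a \<Rightarrow> 'a \<Rightarrow> bool) \<Rightarrow> 'i set \<Rightarrow> ('i \<Rightarrow> 'a \<Rightarrow> 'a) \<Rightarrow> 'a set set" where
  "C1 le I f = {C. is_chain le C \<and> C \<subseteq> (\<Union>\<alpha>\<in>I. range (f \<alpha>))
      \<and> (\<forall>x\<in>C. \<forall>\<alpha>\<in>I. le (f \<alpha> x) x)
      \<and> (\<forall>x\<in>C. \<forall>y\<in>C. strict_rel le x y \<longrightarrow> (\<forall>\<alpha>\<in>I. le x (f \<alpha> y)))}"

definition C1_at :: "'a \<Rightarrow> ('a \<Rightarrow> 'a \<Rightarrow> bool) \<Rightarrow> 'i set \<Rightarrow> ('i \<Rightarrow> 'a \<Rightarrow> 'a) \<Rightarrow> 'a set set" where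
  "C1_at x0 le I f = {C \<in> C1 le I f.
      C \<subseteq> lower_set le x0 \<inter> (\<Union>\<alpha>\<in>I. f \<alpha> ` lower_set le x0)}"

definition ComFix :: "'i set \<Rightarrow> ('i \<Rightarrow> 'a \<Rightarrow> 'a) \<Rightarrow> 'a set" where
  "ComFix I f = {x. \<forall>\<alpha>\<in>I. f \<alpha> x = x}"

definition common_lower_bound ::
  "('a \<Rightarrow> 'a \<Rightarrow> bool) \<Rightarrow> 'i set \<Rightarrow> ('i \<Rightarrow> 'a \<Rightarrow> 'a) \<Rightarrow> 'a set \<Rightarrow> 'a \<Rightarrow> bool" where
  "common_lower_bound le I f C w \<longleftrightarrow> (\<forall>x\<in>C. \<forall>\<alpha>\<in>I. le w (f \<alpha> x))"

definition minimal_element :: "('a \<Rightarrow> 'a \<Rightarrow> bool) \<Rightarrow> 'a set \<Rightarrow> 'a \<Rightarrow> bool" where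
  "minimal_element le A w \<longleftrightarrow> w \<in> A \<and> \<not> (\<exists>u\<in>A. strict_rel le u w)"

end

theory Submission
  imports Defs
begin

lemma fix_lemma:
  fixes s :: real and d :: "'a \<Rightarrow> 'a \<Rightarrow> real" and le :: "'a \<Rightarrow> 'a \<Rightarrow> bool"
    and I :: "'i set" and f :: "'i \<Rightarrow> 'a \<Rightarrow> 'a"
  assumes space: "preordered_s_regular_b_metric s d le"
    and iso: "concordantly_isotone le I f"
    and a: "\<alpha> \<in> I"
    and wdec: "\<forall>\<alpha>\<in>I. le (f \<alpha> w) w"
    and wz: "\<forall>i::nat. i \<ge> 1 \<longrightarrow> le w ((f \<beta> ^^ i) z)"
    and lim: "(\<lambda>i. d ((f \<alpha> ^^ i) w) ((f \<beta> ^^ i) z)) \<longlonglongrightarrow> 0"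
  shows "f \<alpha> w = w"
proof -
  have refl: "\<And>x. le x x" and trans: "\<And>x y z. le x y \<Longrightarrow> le y z \<Longrightarrow> le x z"
    using space unfolding preordered_s_regular_b_metric_def preorder_rel_def by blast+
  have reg: "\<And>x y z. le x y \<Longrightarrow> le y z \<Longrightarrow> max (d x y) (d y z) \<le> s\<^sup>2 * d x z"
    using space unfolding preordered_s_regular_b_metric_def by blast
  have dnn: "\<And>x y. d x y \<ge> 0" and d0: "\<And>x y. d x y = 0 \<longleftrightarrow> x = y"
    using space unfolding preordered_s_regular_b_metric_def b_metric_def by blast+
  have dec: "le ((f \<alpha> ^^ Suc i) w) ((f \<alpha> ^^ i) w)" for i
  proof (induction i)
    case 0 then show ?case using wdec a by simp
  next
    case (Suc i)
    show ?case
    proof (cases "(f \<alpha> ^^ Suc i) w = (f \<alpha> ^^ i) w")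
      case True then show ?thesis by (simp add: refl)
    next
      case False
      then have "strict_rel le ((f \<alpha> ^^ Suc i) w) ((f \<alpha> ^^ i) w)"
        using Suc unfolding strict_rel_def by simp
      then show ?thesis using iso a unfolding concordantly_isotone_def by simp
    qed
  qed
  have below1: "i \<ge> 1 \<Longrightarrow> le ((f \<alpha> ^^ i) w) (f \<alpha> w)" for i
  proof (induction i rule: dec_induct)
    case base then show ?case by (simp add: refl)
  next
    case (step n) then show ?case using dec[of n] trans by blast
  qed
  have below: "le ((f \<alpha> ^^ i) w) w" for i
  proof (cases "i \<ge> 1")
    case True then show ?thesis using below1[OF True] wdec a trans by blast
  next
    case False then have "i = 0" by simp
    then show ?thesis by (simp add: refl)
  qed
  have b1: "d ((f \<alpha> ^^ i) w) w \<le> s\<^sup>2 * d ((f \<alpha> ^^ i) w) ((f \<beta> ^^ i) z)" if "i \<ge> 1" for i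
    using reg[OF below[of i] wz[rule_format, OF that]] by simp
  have lim2: "(\<lambda>i. s\<^sup>2 * d ((f \<alpha> ^^ i) w) ((f \<beta> ^^ i) z)) \<longlonglongrightarrow> 0"
    using tendsto_mult_right_zero[OF lim] by simp
  have lim3: "(\<lambda>i. d ((f \<alpha> ^^ i) w) w) \<longlonglongrightarrow> 0"
  proof (rule tendsto_sandwich[OF _ _ tendsto_const lim2])
    show "\<forall>\<^sub>F n in sequentially. 0 \<le> d ((f \<alpha> ^^ n) w) w" by (intro always_eventually allI dnn)
    show "\<forall>\<^sub>F n in sequentially. d ((f \<alpha> ^^ n) w) w \<le> s\<^sup>2 * d ((f \<alpha> ^^ n) w) ((f \<beta> ^^ n) z)"
      by (rule eventually_sequentiallyI[of 1]) (rule b1)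
  qed
  have lim4: "(\<lambda>i. s\<^sup>2 * d ((f \<alpha> ^^ i) w) w) \<longlonglongrightarrow> 0"
    using tendsto_mult_right_zero[OF lim3] by simp
  have b2: "d (f \<alpha> w) w \<le> s\<^sup>2 * d ((f \<alpha> ^^ i) w) w" if "i \<ge> 1" for i
    using reg[OF below1[OF that] wdec[rule_format, OF a]] by simp
  have "d (f \<alpha> w) w \<le> 0"
  proof (rule tendsto_le[OF _ lim4 tendsto_const])
    show "\<forall>\<^sub>F x in sequentially. d (f \<alpha> w) w \<le> s\<^sup>2 * d ((f \<alpha> ^^ x) w) w"
      by (rule eventually_sequentiallyI[of 1]) (rule b2)
  qed simp
  then show ?thesis using dnn[of "f \<alpha> w" w] d0 by simp
qed


lemma fix_from_chain:
  fixes s :: real and d :: "'a \<Rightarrow> 'a \<Rightarrow> real" and le :: "'a \<Rightarrow> 'a \<Rightarrow> bool"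
    and I :: "'i set" and f :: "'i \<Rightarrow> 'a \<Rightarrow> 'a"
  assumes space: "preordered_s_regular_b_metric s d le"
    and iso: "concordantly_isotone le I f"
    and H: "\<exists>z. \<exists>\<beta>\<in>I.
           (\<forall>\<alpha>\<in>I. \<forall>i::nat. i \<ge> 1 \<longrightarrow> le (f \<alpha> w) w \<and> le w ((f \<beta> ^^ i) z)) \<and>
           (\<forall>\<alpha>\<in>I. (\<lambda>i. d ((f \<alpha> ^^ i) w) ((f \<beta> ^^ i) z)) \<longlonglongrightarrow> 0)"
  shows "w \<in> ComFix I f"
proof -
  obtain z \<beta> where b: "\<beta> \<in> I"
    and h1: "\<forall>\<alpha>\<in>I. \<forall>i::nat. i \<ge> 1 \<longrightarrow> le (f \<alpha> w) w \<and> le w ((f \<beta> ^^ i) z)"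
    and h2: "\<forall>\<alpha>\<in>I. (\<lambda>i. d ((f \<alpha> ^^ i) w) ((f \<beta> ^^ i) z)) \<longlonglongrightarrow> 0"
    using H by blast
  have wdec: "\<forall>\<alpha>\<in>I. le (f \<alpha> w) w" using h1 by (meson order_refl)
  have wz: "\<forall>i::nat. i \<ge> 1 \<longrightarrow> le w ((f \<beta> ^^ i) z)" using h1 b by blast
  show ?thesis unfolding ComFix_def
    using fix_lemma[OF space iso _ wdec wz] h2 by blast
qed

theorem theorem3p1:
  fixes s :: real and d :: "'a \<Rightarrow> 'a \<Rightarrow> real" and le :: "'a \<Rightarrow> 'a \<Rightarrow> bool"
    and x0 :: 'a and I :: "'i set" and f :: "'i \<Rightarrow> 'a \<Rightarrow> 'a"
  assumes space: "preordered_s_regular_b_metric s d le"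
    and I_ne: "I \<noteq> {}"
    and iso: "concordantly_isotone le I f"
    and x0: "\<forall>\<alpha>\<in>I. le (f \<alpha> x0) x0"
    and chains: "\<forall>C \<in> C1_at x0 le I f. \<exists>w. common_lower_bound le I f C w \<and>
        (\<exists>z. \<exists>\<beta>\<in>I.
           (\<forall>\<alpha>\<in>I. \<forall>i::nat. i \<ge> 1 \<longrightarrow> le (f \<alpha> w) w \<and> le w ((f \<beta> ^^ i) z)) \<and>
           (\<forall>\<alpha>\<in>I. (\<lambda>i. d ((f \<alpha> ^^ i) w) ((f \<beta> ^^ i) z)) \<longlonglongrightarrow> 0))"
  shows "ComFix I f \<inter> lower_set le x0 \<noteq> {} \<and>
         (\<exists>w. minimal_element le (ComFix I f \<inter> lower_set le x0) w)"
proof -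
  have refl: "\<And>x. le x x" and trans: "\<And>x y z. le x y \<Longrightarrow> le y z \<Longrightarrow> le x z"
    using space unfolding preordered_s_regular_b_metric_def preorder_rel_def by blast+
  have reg: "\<And>x y z. le x y \<Longrightarrow> le y z \<Longrightarrow> max (d x y) (d y z) \<le> s\<^sup>2 * d x z"
    using space unfolding preordered_s_regular_b_metric_def by blast
  have dnn: "\<And>x y. d x y \<ge> 0" and d0: "\<And>x y. d x y = 0 \<longleftrightarrow> x = y"
    using space unfolding preordered_s_regular_b_metric_def b_metric_def by blast+
  have antis: "x = y" if "le x y" "le y x" for x y
  proof -
    have "max (d x y) (d y x) \<le> s\<^sup>2 * d x x" using reg[OF that] .
    then have "d x y \<le> 0" using d0[of x x] by simp
    then show ?thesis using dnn[of x y] d0[of x y] by simp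
  qed
  define A where "A = ComFix I f \<inter> lower_set le x0"
  obtain \<alpha>0 where a0: "\<alpha>0 \<in> I" using I_ne by blast
  let ?y = "f \<alpha>0 x0"
  have yx0: "le ?y x0" using x0 a0 by blast
  have yy: "le (f \<alpha> ?y) ?y" if "\<alpha> \<in> I" for \<alpha>
  proof (cases "?y = x0")
    case True then show ?thesis using x0 that by simp
  next
    case False
    then have "strict_rel le ?y x0" using yx0 unfolding strict_rel_def by simp
    then show ?thesis using iso that a0 unfolding concordantly_isotone_def by blast
  qed
  have C0: "{?y} \<in> C1_at x0 le I f"
    unfolding C1_at_def C1_def is_chain_def lower_set_def strict_rel_def
    using yx0 yy a0 refl by blast
  then obtain w where w1: "common_lower_bound le I f {?y} w" and w2: "\<exists>z. \<exists>\<beta>\<in>I.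
           (\<forall>\<alpha>\<in>I. \<forall>i::nat. i \<ge> 1 \<longrightarrow> le (f \<alpha> w) w \<and> le w ((f \<beta> ^^ i) z)) \<and>
           (\<forall>\<alpha>\<in>I. (\<lambda>i. d ((f \<alpha> ^^ i) w) ((f \<beta> ^^ i) z)) \<longlonglongrightarrow> 0)"
    using chains by blast
  have wfix: "w \<in> ComFix I f" using fix_from_chain[OF space iso w2] .
  have "le w (f \<alpha>0 ?y)" using w1 a0 unfolding common_lower_bound_def by blast
  then have "le w x0" using yy[OF a0] yx0 trans by blast
  then have wA: "w \<in> A" using wfix unfolding A_def lower_set_def by blast
  have "\<exists>m \<in> A. \<forall>a \<in> A. (\<lambda>a b. le b a) m a \<longrightarrow> a = m"
  proof (rule predicate_Zorn)
    show "partial_order_on A (relation_of (\<lambda>a b. le b a) A)"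
      unfolding partial_order_on_def preorder_on_def refl_on_def trans_def antisym_def relation_of_def
      using refl trans antis by blast
  next
    fix C assume C: "C \<in> Chains (relation_of (\<lambda>a b. le b a) A)"
    have CA: "C \<subseteq> A" using C unfolding Chains_def relation_of_def by blast
    show "\<exists>u \<in> A. \<forall>a \<in> C. (\<lambda>a b. le b a) a u"
    proof (cases "C = {}")
      case True then show ?thesis using wA by blast
    next
      case False
      then obtain c where c: "c \<in> C" by blast
      have fixC: "\<And>x \<alpha>. x \<in> C \<Longrightarrow> \<alpha> \<in> I \<Longrightarrow> f \<alpha> x = x"
        using CA unfolding A_def ComFix_def by blast
      have lowC: "\<And>x. x \<in> C \<Longrightarrow> le x x0"
        using CA unfolding A_def lower_set_def by blast
      have ch: "is_chain le C"
        using C unfolding Chains_def relation_of_def is_chain_def by blast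
      have "C \<in> C1_at x0 le I f"
        unfolding C1_at_def C1_def
      proof (intro CollectI conjI ballI impI subsetI)
        show "is_chain le C" by (rule ch)
      next
        fix x assume "x \<in> C" then show "x \<in> (\<Union>\<alpha>\<in>I. range (f \<alpha>))"
          using fixC a0 by (metis UN_I rangeI)
      next
        fix x \<alpha> assume "x \<in> C" "\<alpha> \<in> I" then show "le (f \<alpha> x) x" using fixC refl by simp
      next
        fix x y \<alpha> assume "x \<in> C" "y \<in> C" "strict_rel le x y" "\<alpha> \<in> I"
        then show "le x (f \<alpha> y)" using fixC unfolding strict_rel_def by simp
      next
        fix x assume "x \<in> C"
        then show "x \<in> lower_set le x0 \<inter> (\<Union>\<alpha>\<in>I. f \<alpha> ` lower_set le x0)"
          using fixC lowC a0 unfolding lower_set_def by (metis (mono_tags, lifting) IntI UN_I image_eqI mem_Collect_eq)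
      qed
      then obtain u where u1: "common_lower_bound le I f C u" and u2: "\<exists>z. \<exists>\<beta>\<in>I.
           (\<forall>\<alpha>\<in>I. \<forall>i::nat. i \<ge> 1 \<longrightarrow> le (f \<alpha> u) u \<and> le u ((f \<beta> ^^ i) z)) \<and>
           (\<forall>\<alpha>\<in>I. (\<lambda>i. d ((f \<alpha> ^^ i) u) ((f \<beta> ^^ i) z)) \<longlonglongrightarrow> 0)"
        using chains by blast
      have ufix: "u \<in> ComFix I f" using fix_from_chain[OF space iso u2] .
      have ub: "\<And>x. x \<in> C \<Longrightarrow> le u x"
        using u1 fixC a0 unfolding common_lower_bound_def by metis
      have "le u x0" using ub[OF c] lowC[OF c] trans by blast
      then have "u \<in> A" using ufix unfolding A_def lower_set_def by blast
      then show ?thesis using ub by blast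
    qed
  qed
  then obtain m where m: "m \<in> A" "\<forall>a \<in> A. le a m \<longrightarrow> a = m" by blast
  have "minimal_element le A m"
    unfolding minimal_element_def strict_rel_def using m by blast
  then show ?thesis using wA unfolding A_def by blast
qed

end
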